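(* Let $(\mathcal{F}_\alpha)_{\alpha<\omega_1}$ be a transfinite family and let $\alpha<\beta<\omega_1$ and $\gamma<\omega_1$. Then (a) there is $m\in\mathbb{N}$ with $(\mathcal{F}_\alpha\cap[\{m,m+1,\dots\}]^{<\infty})\sqcup\mathcal{F}_\gamma\subset(\mathcal{F}_\beta\cap[\{m,m+1,\dots\}]^{<\infty})\sqcup\mathcal{F}_\gamma$, and (b) for every infinite $N\subset\mathbb{N}$, $\mathbb{I}(\mathcal{F}_\alpha\sqcup\mathcal{F}_\gamma,N)<\mathbb{I}(\mathcal{F}_\beta\sqcup\mathcal{F}_\gamma,N)$.
   Context: For sets $\mathcal{A},\mathcal{B}$ of finite subsets of $\mathbb{N}$, $\mathcal{A}\sqcup\mathcal{B}=\{A\cup B:A\in\mathcal{A},B\in\mathcal{B}\}$. Transfinite family: given, for each countable limit ordinal $\alpha$, finite sets $A_n(\alpha)\subset[0,\alpha)$ increasing in $n$ with $\max A_n(\alpha)\to\alpha$, set $\mathcal{F}_0=\{\emptyset\}$, $\mathcal{F}_{\beta+1}=\{\{n\}\cup E:n\in\mathbb{N},E\in\mathcal{F}_\beta\}\cup\{\emptyset\}$, and for limit $\alpha$, $\mathcal{F}_\alpha=\{\emptyset\}\cup\{E\ne\emptyset:E\in\bigcup_{\beta\in A_{\min E}(\alpha)}\mathcal{F}_\beta\}$. For $N=\{n_1<n_2<\dots\}$, $\mathcal{F}^N=\{\{n_i:i\in E\}:E\in\mathcal{F}\}$. A hereditary $\mathcal{A}$ is $\alpha$-large on infinite $P$ if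 every infinite $M\subset P$ contains an infinite $N$ with $\mathcal{F}_\alpha^N\subset\mathcal{A}$; $\mathbb{I}(\mathcal{A},P)=\sup\{\alpha<\omega_1:\mathcal{A}\text{ is }\alpha\text{-large on }P\}$. *)

theory Defs
  imports Main "HOL-Library.Infinite_Set" "HOL-Library.Countable_Set"
begin

text \<open>Countable ordinals are modelled inside an arbitrary well-ordered type 'o
  together with a distinguished element w1 playing the role of omega_1:
  every element below w1 has countably many predecessors, and w1 itself has
  uncountably many. Then the initial segment below w1 is order-isomorphic to
  omega_1.\<close>

definition is_omega1 :: "'o::wellorder \<Rightarrow> bool" where
  "is_omega1 w1 \<longleftrightarrow> \<not> countable {y. y < w1} \<and> (\<forall>x<w1. countable {y. y < x})"

definition osuc :: "'o::wellorder \<Rightarrow> 'o" where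
  "osuc b = (LEAST d. b < d)"

definition is_zero :: "'o::wellorder \<Rightarrow> bool" where
  "is_zero a \<longleftrightarrow> (\<forall>b. \<not> b < a)"

definition is_limit :: "'o::wellorder \<Rightarrow> bool" where
  "is_limit a \<longleftrightarrow> \<not> is_zero a \<and> (\<forall>b<a. \<exists>d. b < d \<and> d < a)"

definition admissible_A :: "'o::wellorder \<Rightarrow> (nat \<Rightarrow> 'o \<Rightarrow> 'o set) \<Rightarrow> bool" where
  "admissible_A w1 A \<longleftrightarrow> (\<forall>a<w1. is_limit a \<longrightarrow>
      (\<forall>n. finite (A n a) \<and> A n a \<subseteq> {b. b < a} \<and> A n a \<subseteq> A (Suc n) a) \<and>
      (\<forall>b<a. \<exists>n. \<exists>d\<in>A n a. b \<le> d))"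

text \<open>F is the transfinite family determined by A (the recursion determines F
  uniquely on the ordinals below w1).\<close>
definition transfinite_family ::
    "'o::wellorder \<Rightarrow> (nat \<Rightarrow> 'o \<Rightarrow> 'o set) \<Rightarrow> ('o \<Rightarrow> nat set set) \<Rightarrow> bool" where
  "transfinite_family w1 A F \<longleftrightarrow>
     (\<forall>a<w1. is_zero a \<longrightarrow> F a = {{}}) \<and>
     (\<forall>b. osuc b < w1 \<longrightarrow> F (osuc b) = {insert n E | n E. E \<in> F b} \<union> {{}}) \<and>
     (\<forall>a<w1. is_limit a \<longrightarrow>
        F a = {{}} \<union> {E. E \<noteq> {} \<and> E \<in> (\<Union>b\<in>A (Min E) a. F b)})"

definition sqcup :: "nat set set \<Rightarrow> nat set set \<Rightarrow> nat set set" where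
  "sqcup \<A> \<B> = {X \<union> Y | X Y. X \<in> \<A> \<and> Y \<in> \<B>}"

text \<open>F^N for N = {n_0 < n_1 < ...} (enumerated from index 0).\<close>
definition fam_spread :: "nat set set \<Rightarrow> nat set \<Rightarrow> nat set set" where
  "fam_spread \<F> N = {enumerate N ` E | E. E \<in> \<F>}"

definition is_large ::
    "('o \<Rightarrow> nat set set) \<Rightarrow> 'o \<Rightarrow> nat set set \<Rightarrow> nat set \<Rightarrow> bool" where
  "is_large F a \<A> P \<longleftrightarrow>
     (\<forall>M. M \<subseteq> P \<and> infinite M \<longrightarrow> (\<exists>N\<subseteq>M. infinite N \<and> fam_spread (F a) N \<subseteq> \<A>))"

definition large_index ::
    "'o::wellorder \<Rightarrow> ('o \<Rightarrow> nat set set) \<Rightarrow> nat set set \<Rightarrow> nat set \<Rightarrow> 'o" where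
  "large_index w1 F \<A> P = (LEAST s. s \<le> w1 \<and> (\<forall>a<w1. is_large F a \<A> P \<longrightarrow> a \<le> s))"

end

theory Submission
  imports Defs "HOL-Library.Multiset"
begin


lemma osuc_gt: "(b::'o::wellorder) < d \<Longrightarrow> b < osuc b"
  unfolding osuc_def by (rule LeastI)

lemma osuc_le: "(b::'o::wellorder) < d \<Longrightarrow> osuc b \<le> d"
  unfolding osuc_def by (rule Least_le)

lemma less_osuc_iff: "(b::'o::wellorder) < d \<Longrightarrow> y < osuc b \<longleftrightarrow> y \<le> b"
  by (metis leD linorder_not_le order_le_less_trans osuc_gt osuc_le)

lemma osuc_not_limit: "(b::'o::wellorder) < d \<Longrightarrow> \<not> is_limit (osuc b)"
  unfolding is_limit_def using osuc_gt less_osuc_iff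
  by (metis leD)

lemma zero_le: "is_zero (a::'o::wellorder) \<Longrightarrow> a \<le> x"
  unfolding is_zero_def using not_le by blast

lemma trichotomy:
  fixes a :: "'o::wellorder"
  shows "is_zero a \<or> is_limit a \<or> (\<exists>b<a. a = osuc b)"
proof -
  { assume nz: "\<not> is_zero a" and nl: "\<not> is_limit a"
    then obtain b where b: "b < a" "\<not> (\<exists>d. b < d \<and> d < a)"
      unfolding is_limit_def by blast
    have "osuc b \<le> a" using osuc_le[OF b(1)] .
    moreover have "\<not> osuc b < a" using b osuc_gt[OF b(1)] by blast
    ultimately have "a = osuc b" by simp
    with b have "\<exists>b<a. a = osuc b" by blast }
  then show ?thesis by blast
qed

locale TF =
  fixes w1 :: "'o::wellorder" and A :: "nat \<Rightarrow> 'o \<Rightarrow> 'o set"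
    and F :: "'o \<Rightarrow> nat set set"
  assumes om: "is_omega1 w1"
    and adm: "admissible_A w1 A"
    and tf: "transfinite_family w1 A F"
begin

lemma cnt: "x < w1 \<Longrightarrow> countable {y. y < x}"
  using om unfolding is_omega1_def by blast

lemma osuc_w1: assumes "b < w1" shows "osuc b < w1"
proof (rule ccontr)
  assume "\<not> osuc b < w1"
  hence eq: "osuc b = w1" using osuc_le[OF assms] by simp
  have "{y. y < w1} \<subseteq> insert b {y. y < b}"
  proof
    fix y assume "y \<in> {y. y < w1}"
    hence "y < osuc b" using eq by simp
    hence "y \<le> b" using less_osuc_iff[OF assms] by blast
    thus "y \<in> insert b {y. y < b}" by auto
  qed
  moreover have "countable (insert b {y. y < b})" using cnt[OF assms] by simp
  ultimately have "countable {y. y < w1}" using countable_subset by blast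
  thus False using om unfolding is_omega1_def by blast
qed

lemmas tf_zero = tf[unfolded transfinite_family_def, THEN conjunct1, rule_format]
lemmas tf_suc = tf[unfolded transfinite_family_def, THEN conjunct2, THEN conjunct1, rule_format]
lemmas tf_lim = tf[unfolded transfinite_family_def, THEN conjunct2, THEN conjunct2, rule_format]

lemma F_zero: "a < w1 \<Longrightarrow> is_zero a \<Longrightarrow> F a = {{}}"
  by (rule tf_zero)

lemma F_suc: "b < w1 \<Longrightarrow> F (osuc b) = {insert n E | n E. E \<in> F b} \<union> {{}}"
  by (rule tf_suc, rule osuc_w1)

lemma F_lim: "a < w1 \<Longrightarrow> is_limit a \<Longrightarrow>
   F a = {{}} \<union> {E. E \<noteq> {} \<and> E \<in> (\<Union>b\<in>A (Min E) a. F b)}"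
  by (rule tf_lim)

lemmas adm' = adm[unfolded admissible_A_def, rule_format]

lemma A_fin: "a < w1 \<Longrightarrow> is_limit a \<Longrightarrow> finite (A n a)"
  using adm' by blast

lemma A_less: "a < w1 \<Longrightarrow> is_limit a \<Longrightarrow> c \<in> A n a \<Longrightarrow> c < a"
  using adm' by blast

lemma A_mono: assumes "a < w1" "is_limit a" "n \<le> n'" shows "A n a \<subseteq> A n' a"
proof -
  have "\<forall>n. A n a \<subseteq> A (Suc n) a" using adm'[OF assms(1,2)] by blast
  thus ?thesis using lift_Suc_mono_le[of "\<lambda>n. A n a"] assms(3) by blast
qed

lemma A_cof: "a < w1 \<Longrightarrow> is_limit a \<Longrightarrow> b < a \<Longrightarrow> \<exists>n. \<exists>d\<in>A n a. b \<le> d"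
  using adm' by blast

lemma F_lim_mem: assumes "a < w1" "is_limit a" "E \<in> F a" "E \<noteq> {}"
  shows "\<exists>c\<in>A (Min E) a. E \<in> F c"
proof -
  have "E \<in> {E. E \<noteq> {} \<and> E \<in> (\<Union>b\<in>A (Min E) a. F b)}"
    using assms(3,4) unfolding F_lim[OF assms(1,2)] by blast
  thus ?thesis by blast
qed

lemma F_lim_intro: assumes "a < w1" "is_limit a" "c \<in> A (Min E) a" "E \<in> F c"
  shows "E \<in> F a"
proof (cases "E = {}")
  case True
  then show ?thesis unfolding F_lim[OF assms(1,2)] by blast
next
  case False
  then show ?thesis unfolding F_lim[OF assms(1,2)] using assms(3,4) by blast
qed

lemma F_basic:
  assumes "a < w1"
  shows "{} \<in> F a \<and> (\<forall>E\<in>F a. finite E)"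
  using assms
proof (induction a rule: less_induct)
  case (less a)
  consider "is_zero a" | "is_limit a" | b where "b < a" "a = osuc b"
    using trichotomy by blast
  then show ?case
  proof cases
    case 1 then show ?thesis using F_zero less.prems by simp
  next
    case 2
    have "\<forall>E\<in>F a. finite E"
    proof
      fix E assume "E \<in> F a"
      show "finite E"
      proof (cases "E = {}")
        case False
        then obtain c where "c \<in> A (Min E) a" "E \<in> F c" using F_lim_mem[OF less.prems 2 \<open>E \<in> F a\<close>] False by blast
        moreover have "c < a" using A_less[OF less.prems 2] calculation by blast
        ultimately show ?thesis using less.IH less.prems by (meson order.strict_trans)
      qed simp
    qed
    then show ?thesis using F_lim[OF less(2) 2] by blast
  next
    case 3
    have "b < w1" using 3 less.prems by simp
    then show ?thesis using F_suc 3 less.IH[OF 3(1)] by auto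
  qed
qed

lemma F_empty: "a < w1 \<Longrightarrow> {} \<in> F a" using F_basic by blast
lemma F_finite: "a < w1 \<Longrightarrow> E \<in> F a \<Longrightarrow> finite E" using F_basic by blast

lemma F_sub_suc: assumes "b < w1" shows "F b \<subseteq> F (osuc b)"
proof
  fix E assume E: "E \<in> F b"
  show "E \<in> F (osuc b)"
  proof (cases "E = {}")
    case False
    then obtain x where "x \<in> E" by blast
    hence "E = insert x E" by blast
    then show ?thesis using F_suc[OF assms] E by blast
  qed (simp add: F_suc[OF assms])
qed

lemma F_spread:
  assumes "a < w1"
  shows "\<forall>E\<in>F a. \<forall>f. (\<forall>x\<in>E. x \<le> f x) \<longrightarrow> f ` E \<in> F a"
  using assms
proof (induction a rule: less_induct)
  case (less a)
  consider "is_zero a" | "is_limit a" | b where "b < a" "a = osuc b"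
    using trichotomy by blast
  then show ?case
  proof cases
    case 1 then show ?thesis using F_zero less.prems by simp
  next
    case 2
    show ?thesis
    proof (intro ballI allI impI)
      fix E f assume E: "E \<in> F a" and f: "\<forall>x\<in>E. x \<le> f x"
      show "f ` E \<in> F a"
      proof (cases "E = {}")
        case True then show ?thesis using E by simp
      next
        case False
        have ne: "E \<noteq> {}" using False by simp
        then obtain c where c: "c \<in> A (Min E) a" "E \<in> F c" using F_lim_mem[OF less.prems 2 E] False ne by blast
        have ca: "c < a" using A_less[OF less.prems 2 c(1)] .
        have fin: "finite E" using F_finite[OF less.prems E] .
        have "Min E \<le> Min (f ` E)"
        proof -
          have "Min (f ` E) \<in> f ` E" using fin False by (intro Min_in) auto
          then obtain x where x: "x \<in> E" "Min (f ` E) = f x" by blast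
          have "Min E \<le> x" using fin x(1) by simp
          also have "x \<le> f x" using f x(1) by blast
          finally show ?thesis using x(2) by simp
        qed
        hence "c \<in> A (Min (f ` E)) a" using A_mono[OF less(2) 2] c by blast
        moreover have "f ` E \<in> F c"
        proof -
          have cw: "c < w1" using ca less.prems by simp
          show ?thesis using less.IH[OF ca cw, rule_format, OF c(2)] f by blast
        qed
        ultimately show ?thesis using F_lim_intro[OF less(2) 2] by blast
      qed
    qed
  next
    case 3
    have bw: "b < w1" using 3 less.prems by simp
    show ?thesis
    proof (intro ballI allI impI)
      fix E f assume E: "E \<in> F a" and f: "\<forall>x\<in>E. x \<le> f x"
      show "f ` E \<in> F a"
      proof (cases "E = {}")
        case True then show ?thesis using E by simp
      next
        case False
        have Ea: "E \<in> F (osuc b)" using E 3(2) by simp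
        then obtain n E0 where E0: "E = insert n E0" "E0 \<in> F b" using F_suc[OF bw] False by blast
        have "\<forall>x\<in>E0. x \<le> f x" using f E0(1) by blast
        hence "f ` E0 \<in> F b" using less.IH[OF 3(1) bw, rule_format, OF E0(2)] by blast
        hence "insert (f n) (f ` E0) \<in> F (osuc b)" using F_suc[OF bw] by blast
        thus ?thesis using E0(1) 3(2) by simp
      qed
    qed
  qed
qed

lemma F_spread': "a < w1 \<Longrightarrow> E \<in> F a \<Longrightarrow> (\<And>x. x \<in> E \<Longrightarrow> x \<le> f x) \<Longrightarrow> f ` E \<in> F a"
  using F_spread[of a] by simp

lemma F_hered:
  assumes "a < w1"
  shows "\<forall>E\<in>F a. \<forall>E'. E' \<subseteq> E \<longrightarrow> E' \<in> F a"
  using assms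
proof (induction a rule: less_induct)
  case (less a)
  consider "is_zero a" | "is_limit a" | b where "b < a" "a = osuc b"
    using trichotomy by blast
  then show ?case
  proof cases
    case 1 then show ?thesis using F_zero less.prems by simp
  next
    case 2
    show ?thesis
    proof (intro ballI allI impI)
      fix E E' assume E: "E \<in> F a" and sub: "E' \<subseteq> E"
      show "E' \<in> F a"
      proof (cases "E' = {}")
        case True then show ?thesis using F_empty less.prems by simp
      next
        case False
        hence ne: "E \<noteq> {}" using sub by blast
        then obtain c where c: "c \<in> A (Min E) a" "E \<in> F c" using F_lim_mem[OF less.prems 2 E] False ne by blast
        have ca: "c < a" using A_less[OF less.prems 2 c(1)] .
        have fin: "finite E" using F_finite[OF less.prems E] .
        have "Min E \<le> Min E'"
          using fin False sub by (meson Min_antimono)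
        hence "c \<in> A (Min E') a" using A_mono[OF less(2) 2] c by blast
        moreover have "E' \<in> F c" using less.IH[OF ca] ca less(2) c sub by auto
        ultimately show ?thesis using F_lim_intro[OF less(2) 2] by blast
      qed
    qed
  next
    case 3
    have bw: "b < w1" using 3 less.prems by simp
    show ?thesis
    proof (intro ballI allI impI)
      fix E E' assume E: "E \<in> F a" and sub: "E' \<subseteq> E"
      show "E' \<in> F a"
      proof (cases "E = {}")
        case True then show ?thesis using E sub by simp
      next
        case False
        then obtain n E0 where E0: "E = insert n E0" "E0 \<in> F b" using E F_suc[OF bw] 3 by auto
        show ?thesis
        proof (cases "n \<in> E'")
          case True
          have "E' - {n} \<subseteq> E0" using sub E0(1) by blast
          hence "E' - {n} \<in> F b" using less.IH[OF 3(1) bw, rule_format, OF E0(2)] by blast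
          moreover have "E' = insert n (E' - {n})" using True by blast
          ultimately show ?thesis using F_suc[OF bw] 3 by blast
        next
          case False
          have "E' \<subseteq> E0" using sub E0(1) False by blast
          hence "E' \<in> F b" using less.IH[OF 3(1) bw, rule_format, OF E0(2)] by blast
          then show ?thesis using F_sub_suc[OF bw] 3 by blast
        qed
      qed
    qed
  qed
qed

lemma F_hered': "a < w1 \<Longrightarrow> E \<in> F a \<Longrightarrow> E' \<subseteq> E \<Longrightarrow> E' \<in> F a"
  using F_hered[of a] by simp

end


lemma strict_mono_range_eq:
  fixes f g :: "nat \<Rightarrow> nat"
  assumes f: "strict_mono f" and g: "strict_mono g" and r: "range f = range g"
  shows "f = g"
proof -
  have "f n = g n" for n
  proof (induction n rule: less_induct)
    case (less n)
    have "f n \<in> range g" using r by (metis rangeI)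
    then obtain k where k: "f n = g k" by auto
    have "g n \<in> range f" using r by (metis rangeI)
    then obtain k' where k': "g n = f k'" by auto
    have "\<not> k < n"
    proof
      assume "k < n"
      hence "g k = f k" using less by simp
      hence "f n = f k" using k by simp
      thus False using \<open>k < n\<close> f by (simp add: strict_mono_eq)
    qed
    hence "g n \<le> g k" using g by (simp add: strict_mono_less_eq)
    moreover have "\<not> k' < n"
    proof
      assume "k' < n"
      hence "g k' = f k'" using less by simp
      hence "g n = g k'" using k' by simp
      thus False using \<open>k' < n\<close> g by (simp add: strict_mono_eq)
    qed
    hence "f n \<le> f k'" using f by (simp add: strict_mono_less_eq)
    ultimately show ?case using k k' by simp
  qed
  thus ?thesis by blast
qed

lemma strict_mono_infinite_range: "strict_mono (g::nat \<Rightarrow> nat) \<Longrightarrow> infinite (range g)"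
  using strict_mono_imp_inj_on range_inj_infinite by blast

lemma enum_range: assumes "strict_mono (g::nat \<Rightarrow> nat)" shows "enumerate (range g) = g"
proof -
  have inf: "infinite (range g)" using strict_mono_infinite_range[OF assms] .
  show ?thesis
    by (rule strict_mono_range_eq[OF strict_mono_enumerate[OF inf] assms range_enumerate[OF inf]])
qed

lemma factor:
  fixes g k :: "nat \<Rightarrow> nat"
  assumes g: "strict_mono g" and k: "strict_mono k" and r: "range k \<subseteq> range g"
  shows "\<exists>h. strict_mono h \<and> k = g \<circ> h"
proof -
  define h where "h i = inv g (k i)" for i
  have gh: "g (h i) = k i" for i unfolding h_def using r by (simp add: f_inv_into_f subset_eq)
  have "strict_mono h"
    unfolding strict_mono_def
  proof (intro allI impI)
    fix i j :: nat assume "i < j"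
    hence "g (h i) < g (h j)" using gh k by (simp add: strict_mono_less)
    thus "h i < h j" using g by (simp add: strict_mono_less)
  qed
  moreover have "k = g \<circ> h" using gh by auto
  ultimately show ?thesis by blast
qed

definition good :: "('a \<Rightarrow> nat set set) \<Rightarrow> nat set set \<Rightarrow> 'a \<Rightarrow> (nat \<Rightarrow> nat) \<Rightarrow> bool" where
  "good F \<A> a k \<longleftrightarrow> (\<forall>E\<in>F a. k ` E \<in> \<A>)"

definition LG :: "('a \<Rightarrow> nat set set) \<Rightarrow> 'a \<Rightarrow> nat set set \<Rightarrow> nat set \<Rightarrow> bool" where
  "LG F a \<A> P \<longleftrightarrow> (\<forall>g::nat\<Rightarrow>nat. strict_mono g \<and> range g \<subseteq> P \<longrightarrow> (\<exists>h::nat\<Rightarrow>nat. strict_mono h \<and> good F \<A> a (g \<circ> h)))"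

lemma large_iff: "is_large F a \<A> P \<longleftrightarrow> LG F a \<A> P"
proof
  assume L: "is_large F a \<A> P"
  show "LG F a \<A> P" unfolding LG_def
  proof (intro allI impI)
    fix g :: "nat \<Rightarrow> nat" assume g: "strict_mono g \<and> range g \<subseteq> P"
    have inf: "infinite (range g)" using g strict_mono_infinite_range by blast
    have L': "\<And>M. M \<subseteq> P \<Longrightarrow> infinite M \<Longrightarrow> \<exists>N\<subseteq>M. infinite N \<and> fam_spread (F a) N \<subseteq> \<A>"
      using L unfolding is_large_def by blast
    obtain N where N: "N \<subseteq> range g" "infinite N" "fam_spread (F a) N \<subseteq> \<A>"
      using L'[OF _ inf] g by blast
    have k: "strict_mono (enumerate N)" using strict_mono_enumerate[OF N(2)] .
    have "range (enumerate N) \<subseteq> range g" using range_enumerate[OF N(2)] N(1) by simp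
    then obtain h where h: "strict_mono h" "enumerate N = g \<circ> h"
      using factor[OF _ k] g by blast
    have "good F \<A> a (g \<circ> h)" unfolding good_def
    proof
      fix E assume "E \<in> F a"
      hence "enumerate N ` E \<in> fam_spread (F a) N" unfolding fam_spread_def by blast
      hence "enumerate N ` E \<in> \<A>" using N(3) by blast
      thus "(g \<circ> h) ` E \<in> \<A>" using h(2) by simp
    qed
    thus "\<exists>h. strict_mono h \<and> good F \<A> a (g \<circ> h)" using h(1) by blast
  qed
next
  assume L: "LG F a \<A> P"
  show "is_large F a \<A> P" unfolding is_large_def
  proof (intro allI impI)
    fix M assume M: "M \<subseteq> P \<and> infinite M"
    let ?g = "enumerate M"
    have g1: "strict_mono ?g" using M strict_mono_enumerate by blast
    have g2: "range ?g = M" using M range_enumerate by blast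
    have "\<exists>h::nat\<Rightarrow>nat. strict_mono h \<and> good F \<A> a (?g \<circ> h)"
      using L g1 g2 M unfolding LG_def by blast
    then obtain h where h: "strict_mono h" "good F \<A> a (?g \<circ> h)" by blast
    have sm: "strict_mono (?g \<circ> h)" using g1 h(1) by (simp add: strict_mono_def)
    let ?N = "range (?g \<circ> h)"
    have "?N \<subseteq> M" using g2 by auto
    moreover have "infinite ?N" using strict_mono_infinite_range[OF sm] .
    moreover have "fam_spread (F a) ?N \<subseteq> \<A>"
    proof
      fix X assume "X \<in> fam_spread (F a) ?N"
      then obtain E where E: "E \<in> F a" "X = enumerate ?N ` E" unfolding fam_spread_def by blast
      have "X = (?g \<circ> h) ` E" using E(2) enum_range[OF sm] by simp
      thus "X \<in> \<A>" using h(2) E(1) unfolding good_def by blast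
    qed
    ultimately show "\<exists>N\<subseteq>M. infinite N \<and> fam_spread (F a) N \<subseteq> \<A>" by blast
  qed
qed

context TF
begin

lemma good_comp: assumes "a < w1" "good F \<A> a k" "strict_mono h" shows "good F \<A> a (k \<circ> h)"
  unfolding good_def
proof
  fix E assume E: "E \<in> F a"
  have "h ` E \<in> F a" using F_spread'[OF assms(1) E] strict_mono_imp_increasing[OF assms(3)] by blast
  hence "k ` (h ` E) \<in> \<A>" using assms(2) unfolding good_def by blast
  thus "(k \<circ> h) ` E \<in> \<A>" by (simp add: image_comp)
qed

lemma L_lemma:
  assumes "\<beta> < w1"
  shows "\<forall>\<alpha>. \<alpha> < \<beta> \<longrightarrow> (\<exists>m. \<forall>E\<in>F (osuc \<alpha>). E \<subseteq> {m..} \<longrightarrow> E \<in> F \<beta>)"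
  using assms
proof (induction \<beta> rule: less_induct)
  case (less \<beta>)
  show ?case
  proof (intro allI impI)
    fix \<alpha> assume ab: "\<alpha> < \<beta>"
    have aw: "\<alpha> < w1" using ab less.prems by simp
    consider "is_zero \<beta>" | "is_limit \<beta>" | b where "b < \<beta>" "\<beta> = osuc b"
      using trichotomy by blast
    then show "\<exists>m. \<forall>E\<in>F (osuc \<alpha>). E \<subseteq> {m..} \<longrightarrow> E \<in> F \<beta>"
    proof cases
      case 1
      then show ?thesis using ab unfolding is_zero_def by blast
    next
      case 3
      have bw: "b < w1" using 3 less.prems by simp
      have "\<alpha> \<le> b" using ab 3 less_osuc_iff[OF 3(1)] by simp
      then consider "\<alpha> = b" | "\<alpha> < b" by fastforce
      then show ?thesis
      proof cases
        case 1
        have "\<forall>E\<in>F (osuc \<alpha>). E \<subseteq> {0..} \<longrightarrow> E \<in> F \<beta>" using 1 3(2) by simp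
        then show ?thesis by blast
      next
        case 2
        obtain m where m: "\<forall>E\<in>F (osuc \<alpha>). E \<subseteq> {m..} \<longrightarrow> E \<in> F b"
          using less.IH[OF 3(1) bw] 2 by blast
        have "\<forall>E\<in>F (osuc \<alpha>). E \<subseteq> {m..} \<longrightarrow> E \<in> F \<beta>"
          using m F_sub_suc[OF bw] unfolding 3(2) by blast
        then show ?thesis by blast
      qed
    next
      case 2
      obtain d0 where d0: "\<alpha> < d0" "d0 < \<beta>" using 2 ab unfolding is_limit_def by blast
      have sw: "osuc \<alpha> < \<beta>" using osuc_le[OF d0(1)] d0(2) by simp
      have asw: "\<alpha> < osuc \<alpha>" using osuc_gt[OF ab] .
      have osw: "osuc \<alpha> < w1" using osuc_w1[OF aw] .
      obtain n0 d where d: "d \<in> A n0 \<beta>" "osuc \<alpha> \<le> d" using A_cof[OF less.prems 2 sw] by blast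
      have db: "d < \<beta>" using A_less[OF less.prems 2 d(1)] .
      have dw: "d < w1" using db less.prems by simp
      have key: "E \<in> F \<beta>" if "E \<in> F d" "E \<subseteq> {n0..}" for E
      proof (cases "E = {}")
        case True then show ?thesis using F_empty less.prems by simp
      next
        case False
        have fin: "finite E" using F_finite[OF dw that(1)] .
        have "n0 \<le> Min E" using fin False that(2) by auto
        hence "d \<in> A (Min E) \<beta>" using A_mono[OF less.prems 2] d(1) by blast
        thus ?thesis using F_lim_intro[OF less.prems 2] that(1) by blast
      qed
      consider "osuc \<alpha> = d" | "osuc \<alpha> < d" using d(2) by fastforce
      then show ?thesis
      proof cases
        case 1
        then show ?thesis using key by blast
      next
        case 2
        have "\<alpha> < d" using asw 2 by simp
        then obtain m where m: "\<forall>E\<in>F (osuc \<alpha>). E \<subseteq> {m..} \<longrightarrow> E \<in> F d"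
          using less.IH[OF db dw] by blast
        have "\<forall>E\<in>F (osuc \<alpha>). E \<subseteq> {max m n0..} \<longrightarrow> E \<in> F \<beta>"
        proof (intro ballI impI)
          fix E assume E: "E \<in> F (osuc \<alpha>)" "E \<subseteq> {max m n0..}"
          have "E \<subseteq> {m..}" using E(2) by auto
          hence "E \<in> F d" using m E(1) by blast
          moreover have "E \<subseteq> {n0..}" using E(2) by auto
          ultimately show "E \<in> F \<beta>" using key by blast
        qed
        then show ?thesis by blast
      qed
    qed
  qed
qed

lemma L': "\<alpha> < \<beta> \<Longrightarrow> \<beta> < w1 \<Longrightarrow> \<exists>m. \<forall>E\<in>F (osuc \<alpha>). E \<subseteq> {m..} \<longrightarrow> E \<in> F \<beta>"
  using L_lemma[of \<beta>] by blast

lemma L'': assumes "\<alpha> < \<beta>" "\<beta> < w1" shows "\<exists>m. \<forall>E\<in>F \<alpha>. E \<subseteq> {m..} \<longrightarrow> E \<in> F \<beta>"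
proof -
  obtain m where m: "\<forall>E\<in>F (osuc \<alpha>). E \<subseteq> {m..} \<longrightarrow> E \<in> F \<beta>" using L'[OF assms] by blast
  have "F \<alpha> \<subseteq> F (osuc \<alpha>)" using F_sub_suc assms by simp
  thus ?thesis using m by blast
qed

end


context TF
begin

lemma LG_zero: assumes "z < w1" "is_zero z" "{} \<in> \<A>" shows "LG F z \<A> P"
  unfolding LG_def
proof (intro allI impI)
  fix g :: "nat \<Rightarrow> nat" assume g: "strict_mono g \<and> range g \<subseteq> P"
  have "good F \<A> z (g \<circ> id)" unfolding good_def F_zero[OF assms(1,2)] using assms(3) by simp
  moreover have "strict_mono (id::nat\<Rightarrow>nat)" by (simp add: strict_mono_def)
  ultimately show "\<exists>h::nat\<Rightarrow>nat. strict_mono h \<and> good F \<A> z (g \<circ> h)" by blast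
qed

lemma LG_D: fixes g :: "nat \<Rightarrow> nat" assumes "LG F a \<A> P" "strict_mono g" "range g \<subseteq> P"
  shows "\<exists>h. strict_mono h \<and> good F \<A> a (g \<circ> h)"
  using assms unfolding LG_def by blast

lemma shift_mono: "strict_mono (\<lambda>i::nat. i + m)"
  by (simp add: strict_mono_def)

lemma LG_down: assumes "\<delta> < w1" "b < \<delta>" "LG F \<delta> \<A> P" shows "LG F b \<A> P"
  unfolding LG_def
proof (intro allI impI)
  fix g :: "nat \<Rightarrow> nat" assume g: "strict_mono g \<and> range g \<subseteq> P"
  obtain h where h: "strict_mono h" "good F \<A> \<delta> (g \<circ> h)" using LG_D[OF assms(3)] g by blast
  obtain m where m: "\<forall>E\<in>F b. E \<subseteq> {m..} \<longrightarrow> E \<in> F \<delta>" using L''[OF assms(2,1)] by blast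
  have bw: "b < w1" using assms by simp
  let ?h = "h \<circ> (\<lambda>i. i + m)"
  have sm: "strict_mono ?h" using h(1) shift_mono[of m] by (simp add: strict_mono_def)
  have "good F \<A> b (g \<circ> ?h)" unfolding good_def
  proof
    fix E assume E: "E \<in> F b"
    have E1: "(\<lambda>i. i + m) ` E \<in> F b" using F_spread'[OF bw E] by simp
    have "(\<lambda>i. i + m) ` E \<subseteq> {m..}" by auto
    hence "(\<lambda>i. i + m) ` E \<in> F \<delta>" using m E1 by blast
    hence "(g \<circ> h) ` ((\<lambda>i. i + m) ` E) \<in> \<A>" using h(2) unfolding good_def by blast
    thus "(g \<circ> ?h) ` E \<in> \<A>" by (simp add: image_comp o_assoc)
  qed
  thus "\<exists>h::nat\<Rightarrow>nat. strict_mono h \<and> good F \<A> b (g \<circ> h)" using sm by blast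
qed

lemma LG_succ:
  assumes ab: "\<alpha> < \<beta>" and bw: "\<beta> < w1" and gw: "\<gamma> < w1" and cw: "c < w1"
    and L: "LG F c (sqcup (F \<alpha>) (F \<gamma>)) P"
  shows "LG F (osuc c) (sqcup (F \<beta>) (F \<gamma>)) P"
  unfolding LG_def
proof (intro allI impI)
  fix g :: "nat \<Rightarrow> nat" assume g: "strict_mono g \<and> range g \<subseteq> P"
  have aw: "\<alpha> < w1" using ab bw by simp
  obtain m where m: "\<forall>E\<in>F (osuc \<alpha>). E \<subseteq> {m..} \<longrightarrow> E \<in> F \<beta>" using L'[OF ab bw] by blast
  let ?g = "g \<circ> (\<lambda>i. i + m)"
  have g1: "strict_mono ?g" using g shift_mono[of m] by (simp add: strict_mono_def)
  have g2: "range ?g \<subseteq> P" using g by auto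
  obtain h where h: "strict_mono h" "good F (sqcup (F \<alpha>) (F \<gamma>)) c (?g \<circ> h)"
    using LG_D[OF L g1 g2] by blast
  let ?k = "?g \<circ> h"
  have kge: "m \<le> ?k i" for i
  proof -
    have "h i + m \<le> g (h i + m)" using g strict_mono_imp_increasing[of g] by simp
    thus ?thesis by simp
  qed
  have "good F (sqcup (F \<beta>) (F \<gamma>)) (osuc c) ?k" unfolding good_def
  proof
    fix E assume E: "E \<in> F (osuc c)"
    show "?k ` E \<in> sqcup (F \<beta>) (F \<gamma>)"
    proof (cases "E = {}")
      case True
      have "{} \<in> F \<beta>" "{} \<in> F \<gamma>" using F_empty bw gw by auto
      hence "{} \<union> {} \<in> sqcup (F \<beta>) (F \<gamma>)" unfolding sqcup_def by blast
      thus ?thesis using True by simp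
    next
      case False
      have "E \<in> {insert n E | n E. E \<in> F c}" using E False unfolding F_suc[OF cw] by blast
      then obtain n E0 where E0: "E = insert n E0" "E0 \<in> F c" by blast
      have "?k ` E0 \<in> sqcup (F \<alpha>) (F \<gamma>)" using h(2) E0(2) unfolding good_def by blast
      then obtain X Z where XZ: "?k ` E0 = X \<union> Z" "X \<in> F \<alpha>" "Z \<in> F \<gamma>" unfolding sqcup_def by blast
      have "insert (?k n) X \<in> F (osuc \<alpha>)" using F_suc[OF aw] XZ(2) by blast
      moreover have "insert (?k n) X \<subseteq> {m..}"
      proof
        fix x assume "x \<in> insert (?k n) X"
        hence "x \<in> range ?k" using XZ(1) by blast
        thus "x \<in> {m..}" using kge by auto
      qed
      ultimately have "insert (?k n) X \<in> F \<beta>" using m by blast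
      moreover have "?k ` E = insert (?k n) X \<union> Z" using E0(1) XZ(1) by simp
      ultimately show ?thesis using XZ(3) unfolding sqcup_def by blast
    qed
  qed
  moreover have "strict_mono ((\<lambda>i. i + m) \<circ> h)" using h(1) shift_mono[of m] by (simp add: strict_mono_def)
  moreover have "?k = g \<circ> ((\<lambda>i. i + m) \<circ> h)" by (simp add: o_assoc)
  ultimately have "strict_mono ((\<lambda>i. i + m) \<circ> h) \<and> good F (sqcup (F \<beta>) (F \<gamma>)) (osuc c) (g \<circ> ((\<lambda>i. i + m) \<circ> h))"
    by simp
  thus "\<exists>h::nat\<Rightarrow>nat. strict_mono h \<and> good F (sqcup (F \<beta>) (F \<gamma>)) (osuc c) (g \<circ> h)"
    by blast
qed

lemma LG_fin:
  fixes g :: "nat \<Rightarrow> nat"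
  assumes "finite D" "\<forall>c\<in>D. c < w1 \<and> LG F c \<A> P" "strict_mono g" "range g \<subseteq> P"
  shows "\<exists>h. strict_mono h \<and> (\<forall>c\<in>D. good F \<A> c (g \<circ> h))"
  using assms
proof (induction D rule: finite_induct)
  case empty
  have "strict_mono (id::nat\<Rightarrow>nat) \<and> (\<forall>c\<in>{}. good F \<A> c (g \<circ> id))" by (simp add: strict_mono_def)
  then show ?case by blast
next
  case (insert c D)
  obtain h1 where h1: "strict_mono h1" "\<forall>d\<in>D. good F \<A> d (g \<circ> h1)" using insert by blast
  have s1: "strict_mono (g \<circ> h1)" using h1(1) insert.prems(2) by (simp add: strict_mono_def)
  have r1: "range (g \<circ> h1) \<subseteq> P" using insert.prems(3) by auto
  have cL: "LG F c \<A> P" "c < w1" using insert.prems(1) by auto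
  obtain h2 where h2: "strict_mono h2" "good F \<A> c ((g \<circ> h1) \<circ> h2)" using LG_D[OF cL(1) s1 r1] by blast
  have "\<forall>d\<in>D. good F \<A> d ((g \<circ> h1) \<circ> h2)"
  proof
    fix d assume d: "d \<in> D"
    have "d < w1" using insert.prems(1) d by blast
    thus "good F \<A> d ((g \<circ> h1) \<circ> h2)" using good_comp h1(2) d h2(1) by blast
  qed
  hence "\<forall>d\<in>insert c D. good F \<A> d (g \<circ> (h1 \<circ> h2))" using h2(2) by (simp add: o_assoc)
  moreover have "strict_mono (h1 \<circ> h2)" using h1(1) h2(1) by (simp add: strict_mono_def)
  ultimately show ?case by blast
qed

end


context TF
begin

lemma LG_lim:
  assumes lw: "l < w1" and ll: "is_limit l" and e: "{} \<in> \<A>"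
    and all: "\<forall>b<l. LG F b \<A> P"
  shows "LG F l \<A> P"
  unfolding LG_def
proof (intro allI impI)
  fix g0 :: "nat \<Rightarrow> nat" assume g0: "strict_mono g0 \<and> range g0 \<subseteq> P"
  define step :: "nat \<Rightarrow> (nat \<Rightarrow> nat) \<Rightarrow> (nat \<Rightarrow> nat)" where
    "step i f = (SOME h. strict_mono h \<and> (\<forall>c\<in>A i l. good F \<A> c (f \<circ> h)))" for i f
  have stepP: "strict_mono (step i f) \<and> (\<forall>c\<in>A i l. good F \<A> c (f \<circ> step i f))"
    if f: "strict_mono f" "range f \<subseteq> P" for i f
  proof -
    have D: "\<forall>c\<in>A i l. c < w1 \<and> LG F c \<A> P"
    proof
      fix c assume c: "c \<in> A i l"
      have "c < l" using A_less[OF lw ll c] .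
      thus "c < w1 \<and> LG F c \<A> P" using all lw by auto
    qed
    have "\<exists>h. strict_mono h \<and> (\<forall>c\<in>A i l. good F \<A> c (f \<circ> h))"
      using LG_fin[OF A_fin[OF lw ll] D f] .
    thus ?thesis unfolding step_def by (rule someI_ex)
  qed
  define G :: "nat \<Rightarrow> nat \<Rightarrow> nat" where "G = rec_nat g0 (\<lambda>i f. f \<circ> step i f)"
  have G0: "G 0 = g0" unfolding G_def by simp
  have GS: "G (Suc i) = G i \<circ> step i (G i)" for i unfolding G_def by simp
  have Ginv: "strict_mono (G i) \<and> range (G i) \<subseteq> P" for i
  proof (induction i)
    case 0 then show ?case using g0 G0 by simp
  next
    case (Suc i)
    have "strict_mono (step i (G i))" using stepP Suc by blast
    hence "strict_mono (G (Suc i))" using Suc GS[of i] by (simp add: strict_mono_def)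
    moreover have "range (G (Suc i)) \<subseteq> P" using Suc GS[of i] by auto
    ultimately show ?case by blast
  qed
  have Sm: "strict_mono (step i (G i))" for i using stepP Ginv by blast
  have Ggood: "\<forall>c\<in>A i l. good F \<A> c (G (Suc i))" for i using stepP Ginv GS by metis
  have Gcomp: "\<exists>H. strict_mono H \<and> G j = G i \<circ> H" if "i \<le> j" for i j
    using that
  proof (induction j rule: dec_induct)
    case base
    have "strict_mono (id::nat\<Rightarrow>nat) \<and> G i = G i \<circ> id" by (simp add: strict_mono_def)
    then show ?case by blast
  next
    case (step n)
    then obtain H where H: "strict_mono H" "G n = G i \<circ> H" by blast
    have "strict_mono (H \<circ> step n (G n)) \<and> G (Suc n) = G i \<circ> (H \<circ> step n (G n))"
      using H Sm[of n] GS[of n] by (simp add: strict_mono_def o_assoc)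
    then show ?case by blast
  qed
  define d where "d j = G (Suc j) j" for j
  have dsm: "strict_mono d"
    unfolding strict_mono_Suc_iff
  proof
    fix j
    have "Suc j \<le> step (Suc j) (G (Suc j)) (Suc j)"
      using strict_mono_imp_increasing[OF Sm[of "Suc j"]] by blast
    hence "j < step (Suc j) (G (Suc j)) (Suc j)" by simp
    hence "G (Suc j) j < G (Suc j) (step (Suc j) (G (Suc j)) (Suc j))"
      using Ginv[of "Suc j"] by (simp add: strict_mono_less)
    thus "d j < d (Suc j)" unfolding d_def using GS[of "Suc j"] by simp
  qed
  have drange: "range d \<subseteq> range g0"
  proof
    fix x assume "x \<in> range d"
    then obtain j where j: "x = G (Suc j) j" unfolding d_def by blast
    obtain H where "G (Suc j) = G 0 \<circ> H" using Gcomp[of 0 "Suc j"] by blast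
    thus "x \<in> range g0" using j G0 by auto
  qed
  obtain h where h: "strict_mono h" "d = g0 \<circ> h" using factor[OF _ dsm drange] g0 by blast
  have "good F \<A> l d" unfolding good_def
  proof
    fix E assume E: "E \<in> F l"
    show "d ` E \<in> \<A>"
    proof (cases "E = {}")
      case True then show ?thesis using e by simp
    next
      case False
      define i where "i = Min E"
      obtain c where c: "c \<in> A i l" "E \<in> F c" using F_lim_mem[OF lw ll E False] unfolding i_def by blast
      have cw: "c < w1" using A_less[OF lw ll c(1)] lw by simp
      have fin: "finite E" using F_finite[OF lw E] .
      have ij: "i \<le> j" if "j \<in> E" for j using fin that unfolding i_def by simp
      define \<phi> where "\<phi> j = (SOME t. j \<le> t \<and> d j = G (Suc i) t)" for j
      have phi: "j \<le> \<phi> j \<and> d j = G (Suc i) (\<phi> j)" if jE: "j \<in> E" for j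
      proof -
        obtain H where H: "strict_mono H" "G (Suc j) = G (Suc i) \<circ> H" using Gcomp[of "Suc i" "Suc j"] ij[OF jE] by auto
        have "j \<le> H j \<and> d j = G (Suc i) (H j)"
          using strict_mono_imp_increasing[OF H(1)] H(2) unfolding d_def by simp
        hence "\<exists>t. j \<le> t \<and> d j = G (Suc i) t" by blast
        thus ?thesis unfolding \<phi>_def by (rule someI_ex)
      qed
      have "\<phi> ` E \<in> F c" using F_spread'[OF cw c(2)] phi by blast
      hence "G (Suc i) ` (\<phi> ` E) \<in> \<A>" using Ggood[of i] c(1) unfolding good_def by blast
      moreover have "d ` E = G (Suc i) ` (\<phi> ` E)"
        using phi by (auto simp: image_iff)
      ultimately show ?thesis by simp
    qed
  qed
  thus "\<exists>h::nat\<Rightarrow>nat. strict_mono h \<and> good F \<A> l (g0 \<circ> h)" using h by blast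
qed

end


definition Pred :: "(nat \<Rightarrow> 'o::wellorder \<Rightarrow> 'o set) \<Rightarrow> 'o \<Rightarrow> nat \<Rightarrow> 'o set" where
  "Pred A a x = (if is_limit a then A x a else {b. b < a \<and> osuc b = a})"

definition fam :: "('o \<Rightarrow> nat set set) \<Rightarrow> ('o \<times> 'o) multiset \<Rightarrow> nat set set" where
  "fam F M = (\<Union>p\<in>set_mset M. sqcup (F (fst p)) (F (snd p)))"

definition peel :: "(nat \<Rightarrow> 'o::wellorder \<Rightarrow> 'o set) \<Rightarrow> ('o \<times> 'o) multiset \<Rightarrow> nat \<Rightarrow> ('o \<times> 'o) multiset" where
  "peel A M x = sum_mset (image_mset (\<lambda>p. image_mset (\<lambda>c. (c, snd p)) (mset_set (Pred A (fst p) x))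
        + image_mset (\<lambda>c. (fst p, c)) (mset_set (Pred A (snd p) x))) M)"

definition Qd :: "('o \<Rightarrow> nat set set) \<Rightarrow> 'o \<Rightarrow> nat set set \<Rightarrow> bool" where
  "Qd F d \<A> \<longleftrightarrow> (\<forall>g::nat\<Rightarrow>nat. strict_mono g \<longrightarrow> (\<exists>E\<in>F d. g ` E \<notin> \<A>))"

definition lexr :: "(('o::wellorder \<times> 'o) \<times> ('o \<times> 'o)) set" where
  "lexr = {(x, y). x < y} <*lex*> {(x, y). x < y}"

lemma wf_lexr: "wf lexr"
  unfolding lexr_def by (intro wf_lex_prod wellorder_class.wf)

lemma set_peel: "set_mset (peel A M x) =
   (\<Union>p\<in>set_mset M. (\<lambda>c. (c, snd p)) ` set_mset (mset_set (Pred A (fst p) x))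
        \<union> (\<lambda>c. (fst p, c)) ` set_mset (mset_set (Pred A (snd p) x)))"
  unfolding peel_def by simp

context TF
begin

lemma Pred_fin: assumes "a < w1" shows "finite (Pred A a x)"
proof (cases "is_limit a")
  case True then show ?thesis unfolding Pred_def using A_fin[OF assms] by simp
next
  case False
  have "{b. b < a \<and> osuc b = a} \<subseteq> {b. b < a \<and> (\<forall>d. b < d \<longrightarrow> a \<le> d)}"
    using osuc_le by blast
  moreover have "finite {b. b < a \<and> (\<forall>d. b < d \<longrightarrow> a \<le> d)}"
  proof (cases "{b. b < a \<and> (\<forall>d. b < d \<longrightarrow> a \<le> d)} = {}")
    case False
    then obtain b0 where b0: "b0 < a" "\<forall>d. b0 < d \<longrightarrow> a \<le> d" by blast
    have "{b. b < a \<and> (\<forall>d. b < d \<longrightarrow> a \<le> d)} \<subseteq> {b0}"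
    proof
      fix b assume b: "b \<in> {b. b < a \<and> (\<forall>d. b < d \<longrightarrow> a \<le> d)}"
      have bb: "b < a" "\<forall>d. b < d \<longrightarrow> a \<le> d" using b by auto
      have "\<not> b < b0" using bb(2) b0(1) leD by blast
      moreover have "\<not> b0 < b" using b0(2) bb(1) leD by blast
      ultimately show "b \<in> {b0}" by simp
    qed
    thus ?thesis using finite_subset by blast
  next
    case True
    then show ?thesis by (metis finite.emptyI)
  qed
  ultimately show ?thesis unfolding Pred_def using False finite_subset by simp
qed

lemma Pred_less: assumes "a < w1" "c \<in> Pred A a x" shows "c < a"
proof (cases "is_limit a")
  case True then show ?thesis using assms A_less[OF assms(1) True] unfolding Pred_def by simp
next
  case False then show ?thesis using assms unfolding Pred_def by simp
qed

lemma peel_one: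
  assumes aw: "a < w1" and X: "X \<in> F a" and x0: "x0 \<in> X" and mn: "\<forall>y\<in>X. x0 \<le> y"
  shows "\<exists>c\<in>Pred A a x0. X - {x0} \<in> F c"
proof -
  consider "is_zero a" | "is_limit a" | b where "b < a" "a = osuc b"
    using trichotomy by blast
  then show ?thesis
  proof cases
    case 1 then show ?thesis using F_zero[OF aw] X x0 by simp
  next
    case 2
    have ne: "X \<noteq> {}" using x0 by blast
    have fin: "finite X" using F_finite[OF aw X] .
    have "Min X = x0" using fin x0 mn by (intro Min_eqI) auto
    then obtain c where c: "c \<in> A x0 a" "X \<in> F c" using F_lim_mem[OF aw 2 X ne] by auto
    have cw: "c < w1" using A_less[OF aw 2 c(1)] aw by simp
    have "X - {x0} \<in> F c" using F_hered'[OF cw c(2)] by blast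
    moreover have "c \<in> Pred A a x0" unfolding Pred_def using 2 c(1) by simp
    ultimately show ?thesis by blast
  next
    case 3
    have bw: "b < w1" using 3 aw by simp
    have nl: "\<not> is_limit a" using osuc_not_limit[OF 3(1)] 3(2) by simp
    have bP: "b \<in> Pred A a x0" unfolding Pred_def using nl 3 by simp
    have "X \<in> {insert n E | n E. E \<in> F b}" using X x0 unfolding 3(2) F_suc[OF bw] by blast
    then obtain n E0 where E0: "X = insert n E0" "E0 \<in> F b" by blast
    show ?thesis
    proof (cases "n = x0")
      case True
      have "X - {x0} \<subseteq> E0" using E0(1) True by blast
      hence "X - {x0} \<in> F b" using F_hered'[OF bw E0(2)] by blast
      then show ?thesis using bP by blast
    next
      case False
      have nX: "n \<in> X" using E0(1) by blast
      have xn: "x0 < n" using mn nX False by force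
      have sub: "X - {n} \<subseteq> E0" using E0(1) by blast
      hence Xn: "X - {n} \<in> F b" using F_hered'[OF bw E0(2)] by blast
      let ?f = "id(x0 := n)"
      have "\<forall>y\<in>X - {n}. y \<le> ?f y" using xn by simp
      hence "?f ` (X - {n}) \<in> F b" using F_spread'[OF bw Xn] by blast
      moreover have "?f ` (X - {n}) = X - {x0}"
      proof
        show "?f ` (X - {n}) \<subseteq> X - {x0}" using nX False x0 by auto
        show "X - {x0} \<subseteq> ?f ` (X - {n})"
        proof
          fix y assume y: "y \<in> X - {x0}"
          show "y \<in> ?f ` (X - {n})"
          proof (cases "y = n")
            case True
            have "?f x0 = n" by simp
            moreover have "x0 \<in> X - {n}" using x0 False by simp
            ultimately show ?thesis using True by (metis image_eqI)
          next
            case False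
            hence "?f y = y" using y by simp
            moreover have "y \<in> X - {n}" using y False by simp
            ultimately show ?thesis by (metis image_eqI)
          qed
        qed
      qed
      ultimately show ?thesis using bP by auto
    qed
  qed
qed

lemma peel_pair:
  assumes aw: "a < w1" and bw: "b < w1" and T: "insert x0 Y \<in> sqcup (F a) (F b)"
    and lt: "\<forall>y\<in>Y. x0 < y"
  shows "(\<exists>c\<in>Pred A a x0. Y \<in> sqcup (F c) (F b)) \<or> (\<exists>c\<in>Pred A b x0. Y \<in> sqcup (F a) (F c))"
proof -
  obtain X Z where XZ: "insert x0 Y = X \<union> Z" "X \<in> F a" "Z \<in> F b" using T unfolding sqcup_def by blast
  have nY: "x0 \<notin> Y" using lt by blast
  have Yeq: "Y = (X - {x0}) \<union> (Z - {x0})" using XZ(1) nY by blast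
  have mnX: "\<forall>y\<in>X. x0 \<le> y" using XZ(1) lt by (metis Un_iff insertE less_imp_le order_refl)
  have mnZ: "\<forall>y\<in>Z. x0 \<le> y" using XZ(1) lt by (metis Un_iff insertE less_imp_le order_refl)
  have "x0 \<in> X \<or> x0 \<in> Z" using XZ(1) by blast
  then show ?thesis
  proof
    assume x0: "x0 \<in> X"
    obtain c where c: "c \<in> Pred A a x0" "X - {x0} \<in> F c" using peel_one[OF aw XZ(2) x0 mnX] by blast
    have "Z - {x0} \<in> F b" using F_hered'[OF bw XZ(3)] by blast
    hence "Y \<in> sqcup (F c) (F b)" using c(2) Yeq unfolding sqcup_def by blast
    thus ?thesis using c(1) by blast
  next
    assume x0: "x0 \<in> Z"
    obtain c where c: "c \<in> Pred A b x0" "Z - {x0} \<in> F c" using peel_one[OF bw XZ(3) x0 mnZ] by blast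
    have "X - {x0} \<in> F a" using F_hered'[OF aw XZ(2)] by blast
    hence "Y \<in> sqcup (F a) (F c)" using c(2) Yeq unfolding sqcup_def by blast
    thus ?thesis using c(1) by blast
  qed
qed

lemma peel_mem1: assumes "p \<in># M" "fst p < w1" "c \<in> Pred A (fst p) x"
  shows "(c, snd p) \<in># peel A M x"
proof -
  have "(c, snd p) \<in> (\<lambda>c. (c, snd p)) ` set_mset (mset_set (Pred A (fst p) x))"
    using Pred_fin[OF assms(2)] assms(3) by simp
  thus ?thesis unfolding set_peel using assms(1) by blast
qed

lemma peel_mem2: assumes "p \<in># M" "snd p < w1" "c \<in> Pred A (snd p) x"
  shows "(fst p, c) \<in># peel A M x"
proof -
  have "(fst p, c) \<in> (\<lambda>c. (fst p, c)) ` set_mset (mset_set (Pred A (snd p) x))"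
    using Pred_fin[OF assms(2)] assms(3) by simp
  thus ?thesis unfolding set_peel using assms(1) by blast
qed

lemma peel_w1: assumes "\<forall>p\<in>#M. fst p < w1 \<and> snd p < w1" "q \<in># peel A M x"
  shows "fst q < w1 \<and> snd q < w1 \<and> (\<exists>p\<in>#M. (q, p) \<in> lexr)"
proof -
  obtain p where p: "p \<in># M" and q: "q \<in> (\<lambda>c. (c, snd p)) ` set_mset (mset_set (Pred A (fst p) x))
        \<union> (\<lambda>c. (fst p, c)) ` set_mset (mset_set (Pred A (snd p) x))"
    using assms(2) unfolding set_peel by blast
  have pw: "fst p < w1" "snd p < w1" using assms(1) p by auto
  from q have "(\<exists>c\<in>Pred A (fst p) x. q = (c, snd p)) \<or> (\<exists>c\<in>Pred A (snd p) x. q = (fst p, c))"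
    using Pred_fin[OF pw(1)] Pred_fin[OF pw(2)] by auto
  then show ?thesis
  proof
    assume "\<exists>c\<in>Pred A (fst p) x. q = (c, snd p)"
    then obtain c where c: "c \<in> Pred A (fst p) x" "q = (c, snd p)" by blast
    have "c < fst p" using Pred_less[OF pw(1) c(1)] .
    hence "(q, p) \<in> lexr" unfolding lexr_def using c(2) by (cases p) auto
    thus ?thesis using c(2) \<open>c < fst p\<close> pw p by auto
  next
    assume "\<exists>c\<in>Pred A (snd p) x. q = (fst p, c)"
    then obtain c where c: "c \<in> Pred A (snd p) x" "q = (fst p, c)" by blast
    have "c < snd p" using Pred_less[OF pw(2) c(1)] .
    hence "(q, p) \<in> lexr" unfolding lexr_def using c(2) by (cases p) auto
    thus ?thesis using c(2) \<open>c < snd p\<close> pw p by auto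
  qed
qed

lemma regular: assumes "\<forall>x::nat. \<delta> x < w1" shows "\<exists>s<w1. \<forall>x. \<delta> x \<le> s"
proof -
  have "countable (\<Union>x. insert (\<delta> x) {y. y < \<delta> x})"
    using cnt assms by (intro countable_UN) auto
  moreover have "\<not> countable {y. y < w1}" using om unfolding is_omega1_def by blast
  ultimately obtain s where s: "s < w1" "s \<notin> (\<Union>x. insert (\<delta> x) {y. y < \<delta> x})"
    by (metis (mono_tags, lifting) countable_subset mem_Collect_eq subsetI)
  hence "\<forall>x. \<delta> x \<le> s" using not_le by fastforce
  thus ?thesis using s(1) by blast
qed

lemma Qd_up: assumes "Qd F d \<A>" "d \<le> d'" "d' < w1" shows "Qd F d' \<A>"
proof (cases "d = d'")
  case True then show ?thesis using assms by simp
next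
  case False
  hence dd: "d < d'" using assms(2) by simp
  have dw: "d < w1" using dd assms(3) by simp
  obtain m where m: "\<forall>E\<in>F d. E \<subseteq> {m..} \<longrightarrow> E \<in> F d'" using L''[OF dd assms(3)] by blast
  show ?thesis unfolding Qd_def
  proof (intro allI impI)
    fix g :: "nat \<Rightarrow> nat" assume g: "strict_mono g"
    have "strict_mono (g \<circ> (\<lambda>i. i + m))" using g by (simp add: strict_mono_def)
    then obtain E0 where E0: "E0 \<in> F d" "(g \<circ> (\<lambda>i. i + m)) ` E0 \<notin> \<A>"
      using assms(1) unfolding Qd_def by blast
    have "(\<lambda>i. i + m) ` E0 \<in> F d" using F_spread'[OF dw E0(1)] by simp
    moreover have "(\<lambda>i. i + m) ` E0 \<subseteq> {m..}" by auto
    ultimately have "(\<lambda>i. i + m) ` E0 \<in> F d'" using m by blast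
    moreover have "g ` ((\<lambda>i. i + m) ` E0) \<notin> \<A>" using E0(2) by (simp add: image_comp)
    ultimately show "\<exists>E\<in>F d'. g ` E \<notin> \<A>" by blast
  qed
qed

lemma w1_nonempty: "\<exists>z. z < w1"
proof -
  have "\<not> countable {y. y < w1}" using om unfolding is_omega1_def by blast
  hence "{y. y < w1} \<noteq> {}" by (metis countable_empty)
  thus ?thesis by blast
qed

lemma Q_main:
  "\<forall>p\<in>#M. fst p < w1 \<and> snd p < w1 \<Longrightarrow> \<exists>\<delta><w1. Qd F \<delta> (fam F M)"
proof (induction M rule: wf_induct_rule[OF wf_mult[OF wf_lexr]])
  case (1 M)
  show ?case
  proof (cases "M = {#}")
    case True
    obtain z where z: "z < w1" using w1_nonempty by blast
    have "Qd F z (fam F M)" using F_empty[OF z] unfolding Qd_def fam_def True by auto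
    then show ?thesis using z by blast
  next
    case False
    have less: "(peel A M x, M) \<in> mult lexr" for x
    proof -
      have "({#} + peel A M x, {#} + M) \<in> mult lexr"
        by (rule one_step_implies_mult[OF False]) (use peel_w1[OF "1.prems"] in blast)
      thus ?thesis by simp
    qed
    have w: "\<forall>q\<in>#peel A M x. fst q < w1 \<and> snd q < w1" for x using peel_w1[OF "1.prems"] by blast
    have ex: "\<exists>\<delta><w1. Qd F \<delta> (fam F (peel A M x))" for x using "1.IH"[OF less w] .
    define \<delta> where "\<delta> x = (SOME \<delta>. \<delta> < w1 \<and> Qd F \<delta> (fam F (peel A M x)))" for x
    have dP: "\<delta> x < w1 \<and> Qd F (\<delta> x) (fam F (peel A M x))" for x
      unfolding \<delta>_def using someI_ex[OF ex] .
    obtain s where s: "s < w1" "\<forall>x. \<delta> x \<le> s" using regular dP by blast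
    have Qs: "Qd F s (fam F (peel A M x))" for x using Qd_up dP s by blast
    have "Qd F (osuc s) (fam F M)" unfolding Qd_def
    proof (intro allI impI)
      fix g :: "nat \<Rightarrow> nat" assume g: "strict_mono g"
      let ?x0 = "g 0"
      have g': "strict_mono (g \<circ> Suc)" using g by (simp add: strict_mono_def)
      obtain E0 where E0: "E0 \<in> F s" "(g \<circ> Suc) ` E0 \<notin> fam F (peel A M ?x0)"
        using Qs[of ?x0] g' unfolding Qd_def by blast
      have "Suc ` E0 \<in> F s" using F_spread'[OF s(1) E0(1)] by simp
      hence Ein: "insert 0 (Suc ` E0) \<in> F (osuc s)" using F_suc[OF s(1)] by blast
      let ?Y = "(g \<circ> Suc) ` E0"
      have gE: "g ` insert 0 (Suc ` E0) = insert ?x0 ?Y" by (simp add: image_comp)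
      have lt: "\<forall>y\<in>?Y. ?x0 < y" using g by (auto simp: strict_mono_less)
      have "insert ?x0 ?Y \<notin> fam F M"
      proof
        assume "insert ?x0 ?Y \<in> fam F M"
        then obtain p where p: "p \<in># M" "insert ?x0 ?Y \<in> sqcup (F (fst p)) (F (snd p))"
          unfolding fam_def by blast
        have pw: "fst p < w1" "snd p < w1" using "1.prems" p(1) by auto
        from peel_pair[OF pw p(2) lt]
        show False
        proof
          assume "\<exists>c\<in>Pred A (fst p) ?x0. ?Y \<in> sqcup (F c) (F (snd p))"
          then obtain c where c: "c \<in> Pred A (fst p) ?x0" "?Y \<in> sqcup (F c) (F (snd p))" by blast
          have "(c, snd p) \<in># peel A M ?x0" using peel_mem1[OF p(1) pw(1) c(1)] .
          hence "?Y \<in> fam F (peel A M ?x0)" using c(2) unfolding fam_def by force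
          thus False using E0(2) by blast
        next
          assume "\<exists>c\<in>Pred A (snd p) ?x0. ?Y \<in> sqcup (F (fst p)) (F c)"
          then obtain c where c: "c \<in> Pred A (snd p) ?x0" "?Y \<in> sqcup (F (fst p)) (F c)" by blast
          have "(fst p, c) \<in># peel A M ?x0" using peel_mem2[OF p(1) pw(2) c(1)] .
          hence "?Y \<in> fam F (peel A M ?x0)" using c(2) unfolding fam_def by force
          thus False using E0(2) by blast
        qed
      qed
      thus "\<exists>E\<in>F (osuc s). g ` E \<notin> fam F M" using Ein gE by metis
    qed
    then show ?thesis using osuc_w1[OF s(1)] by blast
  qed
qed

lemma not_LG: assumes "Qd F \<delta> \<A>" "infinite N" shows "\<not> LG F \<delta> \<A> N"
proof
  assume L: "LG F \<delta> \<A> N"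
  have g: "strict_mono (enumerate N)" "range (enumerate N) \<subseteq> N"
    using assms(2) strict_mono_enumerate range_enumerate by auto
  obtain h where h: "strict_mono h" "good F \<A> \<delta> (enumerate N \<circ> h)" using LG_D[OF L g] by blast
  have "strict_mono (enumerate N \<circ> h)" using g(1) h(1) by (simp add: strict_mono_def)
  then obtain E where "E \<in> F \<delta>" "(enumerate N \<circ> h) ` E \<notin> \<A>" using assms(1) unfolding Qd_def by blast
  thus False using h(2) unfolding good_def by blast
qed

end


theorem proposition5p2:
  fixes w1 :: "'o::wellorder" and A :: "nat \<Rightarrow> 'o \<Rightarrow> 'o set"
    and F :: "'o \<Rightarrow> nat set set" and \<alpha> \<beta> \<gamma> :: 'o
  assumes "is_omega1 w1"
    and "admissible_A w1 A"
    and "transfinite_family w1 A F"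
    and "\<alpha> < \<beta>" and "\<beta> < w1" and "\<gamma> < w1"
  shows "(\<exists>m::nat. sqcup {E \<in> F \<alpha>. finite E \<and> E \<subseteq> {m..}} (F \<gamma>)
                 \<subseteq> sqcup {E \<in> F \<beta>. finite E \<and> E \<subseteq> {m..}} (F \<gamma>))
       \<and> (\<forall>N::nat set. infinite N \<longrightarrow>
            large_index w1 F (sqcup (F \<alpha>) (F \<gamma>)) N < large_index w1 F (sqcup (F \<beta>) (F \<gamma>)) N)"
proof -
  interpret TF w1 A F using assms(1-3) by unfold_locales
  have aw: "\<alpha> < w1" using assms(4,5) by simp
  have partA: "\<exists>m::nat. sqcup {E \<in> F \<alpha>. finite E \<and> E \<subseteq> {m..}} (F \<gamma>)
                 \<subseteq> sqcup {E \<in> F \<beta>. finite E \<and> E \<subseteq> {m..}} (F \<gamma>)"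
  proof -
    obtain m where m: "\<forall>E\<in>F \<alpha>. E \<subseteq> {m..} \<longrightarrow> E \<in> F \<beta>" using L''[OF assms(4,5)] by blast
    have "{E \<in> F \<alpha>. finite E \<and> E \<subseteq> {m..}} \<subseteq> {E \<in> F \<beta>. finite E \<and> E \<subseteq> {m..}}"
      using m by blast
    hence "sqcup {E \<in> F \<alpha>. finite E \<and> E \<subseteq> {m..}} (F \<gamma>)
                 \<subseteq> sqcup {E \<in> F \<beta>. finite E \<and> E \<subseteq> {m..}} (F \<gamma>)"
      unfolding sqcup_def by blast
    thus ?thesis by blast
  qed
  have partB: "large_index w1 F (sqcup (F \<alpha>) (F \<gamma>)) N < large_index w1 F (sqcup (F \<beta>) (F \<gamma>)) N"
    if N: "infinite N" for N
  proof -
    define A1 where "A1 = sqcup (F \<alpha>) (F \<gamma>)"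
    define A2 where "A2 = sqcup (F \<beta>) (F \<gamma>)"
    have e1: "{} \<in> A1" unfolding A1_def sqcup_def using F_empty[OF aw] F_empty[OF assms(6)] by blast
    have famA: "fam F {#(\<alpha>, \<gamma>)#} = A1" unfolding fam_def A1_def by simp
    obtain \<delta>0 where d0: "\<delta>0 < w1" "Qd F \<delta>0 A1" using Q_main[of "{#(\<alpha>, \<gamma>)#}"] aw assms(6) famA by auto
    have nd0: "\<not> LG F \<delta>0 A1 N" using not_LG[OF d0(2) N] .
    define \<delta>' where "\<delta>' = (LEAST \<delta>. \<delta> < w1 \<and> \<not> LG F \<delta> A1 N)"
    have d': "\<delta>' < w1" "\<not> LG F \<delta>' A1 N"
      using LeastI[of "\<lambda>\<delta>. \<delta> < w1 \<and> \<not> LG F \<delta> A1 N", OF conjI[OF d0(1) nd0]] unfolding \<delta>'_def by auto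
    have mn: "LG F \<delta> A1 N" if "\<delta> < \<delta>'" for \<delta>
    proof -
      have "\<delta> < w1" using that d'(1) by simp
      moreover have "\<not> (\<delta> < w1 \<and> \<not> LG F \<delta> A1 N)" using not_less_Least[OF that[unfolded \<delta>'_def]] .
      ultimately show ?thesis by blast
    qed
    consider "is_zero \<delta>'" | "is_limit \<delta>'" | c where "c < \<delta>'" "\<delta>' = osuc c"
      using trichotomy by blast
    then obtain c where c: "c < \<delta>'" "\<delta>' = osuc c"
    proof cases
      case 1
      have "LG F \<delta>' A1 N" using LG_zero[OF d'(1) 1 e1] .
      then show ?thesis using d'(2) by blast
    next
      case 2
      have "LG F \<delta>' A1 N" using LG_lim[OF d'(1) 2 e1] mn by blast
      then show ?thesis using d'(2) by blast
    qed
    have cw: "c < w1" using c(1) d'(1) by simp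
    have Lc: "LG F c A1 N" using mn[OF c(1)] .
    have L2: "LG F \<delta>' A2 N" using LG_succ[OF assms(4,5,6) cw Lc[unfolded A1_def]] c(2) unfolding A2_def by simp
    have bound: "a \<le> c" if "a < w1" "LG F a A1 N" for a
    proof (rule ccontr)
      assume "\<not> a \<le> c"
      hence "c < a" by simp
      hence "\<delta>' \<le> a" using osuc_le c(2) by simp
      then consider "\<delta>' = a" | "\<delta>' < a" by fastforce
      then show False
      proof cases
        case 1 then show False using that d'(2) by simp
      next
        case 2 then show False using LG_down[OF that(1) 2 that(2)] d'(2) by blast
      qed
    qed
    have I1: "large_index w1 F A1 N = c"
      unfolding large_index_def
    proof (rule Least_equality)
      show "c \<le> w1 \<and> (\<forall>a<w1. is_large F a A1 N \<longrightarrow> a \<le> c)"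
        using cw bound by (simp add: large_iff)
      show "c \<le> s" if "s \<le> w1 \<and> (\<forall>a<w1. is_large F a A1 N \<longrightarrow> a \<le> s)" for s
      proof -
        have "is_large F c A1 N" using Lc by (simp add: large_iff)
        thus ?thesis using that cw by blast
      qed
    qed
    have "\<delta>' \<le> large_index w1 F A2 N"
    proof -
      let ?P = "\<lambda>s. s \<le> w1 \<and> (\<forall>a<w1. is_large F a A2 N \<longrightarrow> a \<le> s)"
      have "?P w1" by auto
      hence "?P (LEAST s. ?P s)" by (rule LeastI)
      moreover have "is_large F \<delta>' A2 N" using L2 by (simp add: large_iff)
      ultimately have "\<delta>' \<le> (LEAST s. ?P s)" using d'(1) by blast
      thus ?thesis unfolding large_index_def .
    qed
    moreover have "c < \<delta>'" using c(1) .
    ultimately show ?thesis using I1 unfolding A1_def A2_def by simp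
  qed
  show ?thesis using partA partB by blast
qed


end
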